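(* Let $d\ge1$, $\alpha\in(0,2)$, $\beta\in(0,1)$, $0<\eta\le\frac{\alpha}{\beta d}$, let $V_0:\mathbb{R}^d\to[0,\infty)$ be measurable with $V_0\not\equiv0$, and let $V:(0,\infty)\times\mathbb{R}^d\to[0,\infty]$ be measurable satisfying for all $t>0$, $x\in\mathbb{R}^d$ $$V(t,x)=\int_{\mathbb{R}^d}G(t,x-y)V_0(y)\,dy+\int_{\mathbb{R}^d}\int_0^t G(t-s,x-y)V(s,y)^{1+\eta}\,ds\,dy.$$ Then for every $M>0$ there exists $T_0>0$ such that for all $t\ge T_0$, $$\inf_{x\in B(0,t^{\beta/\alpha})}V(t,x)\ge M.$$
   Context: $p(t,x)$ is the transition density of the symmetric $\alpha$-stable process on $\mathbb{R}^d$; $g_\beta$ is the density of $D_1$ for a $\beta$-stable subordinator with $\mathbb{E}e^{-sD_t}=e^{-ts^\beta}$; $G(t,x)=\int_0^\infty p((t/u)^\beta,x)g_\beta(u)\,du$. *)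

theory Defs
  imports "HOL-Analysis.Analysis"
begin

text \<open>Transition density of the (rotationally) symmetric alpha-stable process on the
  Euclidean space 'a (dimension d = DIM('a)), with characteristic exponent |xi|^alpha:
  p(t,x) = (2 pi)^(-d) * integral of cos(xi . x) * exp(-t |xi|^alpha) dxi.\<close>
definition stable_density :: "real \<Rightarrow> real \<Rightarrow> 'a::euclidean_space \<Rightarrow> real" where
  "stable_density \<alpha> t x =
     (2 * pi) powr (- real DIM('a)) *
     (\<integral>\<xi>. cos (\<xi> \<bullet> x) * exp (- t * norm \<xi> powr \<alpha>) \<partial>lborel)"

text \<open>g is the density of D_1 for a beta-stable subordinator with E exp(-s D_t) = exp(-t s^beta).\<close>
definition is_subordinator_density :: "real \<Rightarrow> (real \<Rightarrow> real) \<Rightarrow> bool" where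
  "is_subordinator_density \<beta> g \<longleftrightarrow>
     g \<in> borel_measurable lborel \<and> (\<forall>u. 0 \<le> g u) \<and> (\<forall>u\<le>0. g u = 0) \<and>
     (\<forall>s>0. (\<integral>\<^sup>+ u. ennreal (exp (- s * u) * g u) \<partial>lborel) = ennreal (exp (- (s powr \<beta>))))"

definition Gker :: "real \<Rightarrow> real \<Rightarrow> (real \<Rightarrow> real) \<Rightarrow> real \<Rightarrow> 'a::euclidean_space \<Rightarrow> ennreal" where
  "Gker \<alpha> \<beta> g t x =
     (\<integral>\<^sup>+ u. indicator {0<..} u * ennreal (stable_density \<alpha> ((t / u) powr \<beta>) x * g u) \<partial>lborel)"

definition enn_powr :: "ennreal \<Rightarrow> real \<Rightarrow> ennreal" where
  "enn_powr v q = (if v = \<infinity> then \<infinity> else ennreal (enn2real v powr q))"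

end

theory Submission
  imports Defs
begin

lemma poly_exp_bound:
  fixes k a p :: real
  assumes "k > 0" "a > 0" "p \<ge> 0"
  shows "\<exists>C>0. \<forall>u\<ge>0. u powr p \<le> C * exp (k * u powr a)"
proof -
  define m :: nat where "m = nat \<lceil>p / a\<rceil>"
  have m: "p \<le> a * real m"
  proof -
    have "p / a \<le> real m" unfolding m_def by (meson real_nat_ceiling_ge)
    then show ?thesis using assms by (simp add: divide_le_eq mult.commute)
  qed
  define C where "C = max 1 ((real m / k) ^ m)"
  have Cpos: "C > 0" unfolding C_def by simp
  have "u powr p \<le> C * exp (k * u powr a)" if u: "u \<ge> 0" for u
  proof (cases "u \<le> 1")
    case True
    have "u powr p \<le> 1" using powr_mono2[of p u 1] u True assms by simp
    also have "1 \<le> C * exp (k * u powr a)"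
    proof -
      have "1 \<le> exp (k * u powr a)" using assms u by simp
      moreover have "1 \<le> C" unfolding C_def by simp
      ultimately show ?thesis by (metis mult_mono' mult_1 zero_le_one)
    qed
    finally show ?thesis .
  next
    case False
    show ?thesis
    proof (cases "m = 0")
      case True
      then have "p \<le> 0" using m by simp
      then have "u powr p \<le> 1" using False assms by simp
      also have "1 \<le> C * exp (k * u powr a)"
      proof -
        have "1 \<le> exp (k * u powr a)" using assms u by simp
        moreover have "1 \<le> C" unfolding C_def by simp
        ultimately show ?thesis by (metis mult_mono' mult_1 zero_le_one)
      qed
      finally show ?thesis .
    next
      case mpos: False
      have "u powr p \<le> u powr (a * real m)" using False m by (intro powr_mono) auto
      also have "\<dots> = (u powr a) ^ m" using False by (simp add: powr_powr powr_realpow[symmetric])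
      also have "\<dots> = (real m / k) ^ m * ((k / real m) * u powr a) ^ m"
        using mpos assms by (simp add: power_mult_distrib[symmetric])
      also have "\<dots> \<le> C * ((k / real m) * u powr a) ^ m"
        unfolding C_def by (intro mult_right_mono) (use assms u in auto)
      also have "((k / real m) * u powr a) ^ m \<le> exp ((k / real m) * u powr a) ^ m"
        using assms u
        by (intro power_mono) (smt (verit) exp_ge_add_one_self, simp)
      also have "exp ((k / real m) * u powr a) ^ m = exp (k * u powr a)"
        using mpos by (simp add: exp_of_nat_mult[symmetric])
      finally show ?thesis using Cpos by (simp add: mult_left_mono)
    qed
  qed
  then show ?thesis using Cpos by blast
qed

lemma nn_int_inv_sq: "(\<integral>\<^sup>+x. indicator {1..} x * ennreal (1 / x ^ 2) \<partial>lborel) = 1"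
proof -
  have "((\<lambda>x::real. 1 / x ^ 2) has_integral 1 / (real (2 - 1) * 1 ^ (2 - 1))) {1..}"
    by (rule has_integral_inverse_power_to_inf) auto
  then have "((\<lambda>x::real. 1 / x ^ 2) has_integral 1) {1..}" by simp
  from nn_integral_has_integral_lebesgue'[OF _ this]
  show ?thesis by (simp add: mult.commute)
qed

lemma int1d_finite:
  fixes k a :: real
  assumes "k > 0" "a > 0"
  shows "(\<integral>\<^sup>+x. ennreal (exp (- k * \<bar>x\<bar> powr a)) \<partial>lborel) < \<infinity>"
proof -
  obtain C where C: "C > 0" "\<And>u. u \<ge> 0 \<Longrightarrow> u powr 2 \<le> C * exp (k * u powr a)"
    using poly_exp_bound[of k a 2] assms by auto
  define h :: "real \<Rightarrow> ennreal" where "h x = indicator {1..} x * ennreal (1 / x ^ 2)" for x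
  have h_meas[measurable]: "h \<in> borel_measurable borel" unfolding h_def by measurable
  have pw: "ennreal (exp (- k * \<bar>x\<bar> powr a)) \<le> indicator {-1..1} x + ennreal C * h x + ennreal C * h (0 + (-1) * x)" for x
  proof (cases "\<bar>x\<bar> \<le> 1")
    case True
    then have "ennreal (exp (- k * \<bar>x\<bar> powr a)) \<le> 1" using assms by simp
    also have "1 = (indicator {-1..1} x :: ennreal)" using True by (simp add: indicator_def abs_le_iff)
    finally show ?thesis by (simp add: add.assoc add_increasing2)
  next
    case False
    have xpos: "\<bar>x\<bar> > 0" using False by simp
    have e: "exp (- k * \<bar>x\<bar> powr a) \<le> C * (1 / x ^ 2)"
    proof -
      have "x ^ 2 \<le> C * exp (k * \<bar>x\<bar> powr a)" using C(2)[of "\<bar>x\<bar>"] xpos by simp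
      then have "x ^ 2 * exp (- k * \<bar>x\<bar> powr a) \<le> C * exp (k * \<bar>x\<bar> powr a) * exp (- k * \<bar>x\<bar> powr a)"
        by (intro mult_right_mono) auto
      also have "\<dots> = C" by (simp add: mult.assoc exp_add[symmetric])
      finally show ?thesis using xpos by (simp add: field_simps)
    qed
    have "ennreal (exp (- k * \<bar>x\<bar> powr a)) \<le> ennreal C * ennreal (1 / x ^ 2)"
      using e C by (simp add: ennreal_mult'[symmetric] ennreal_leI)
    also have "\<dots> \<le> ennreal C * h x + ennreal C * h (0 + (-1) * x)"
    proof (cases "x \<ge> 1")
      case True then show ?thesis by (simp add: h_def)
    next
      case F2: False
      then have "-x \<ge> 1" using False by simp
      then show ?thesis by (simp add: h_def)
    qed
    finally show ?thesis by (simp add: add.assoc add_increasing)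
  qed
  have "(\<integral>\<^sup>+x. ennreal (exp (- k * \<bar>x\<bar> powr a)) \<partial>lborel) \<le>
        (\<integral>\<^sup>+x. indicator {-1..1} x + ennreal C * h x + ennreal C * h (0 + (-1) * x) \<partial>lborel)"
    by (rule nn_integral_mono) (rule pw)
  also have "\<dots> = (\<integral>\<^sup>+x. indicator {-1..1} (x::real) \<partial>lborel) + ennreal C * (\<integral>\<^sup>+x. h x \<partial>lborel)
       + ennreal C * (\<integral>\<^sup>+x. h (0 + (-1) * x) \<partial>lborel)"
  proof -
    have "(\<integral>\<^sup>+x. indicator {-1..1} x + ennreal C * h x + ennreal C * h (0 + (-1) * x) \<partial>lborel)
       = (\<integral>\<^sup>+x. indicator {-1..1} x + ennreal C * h x \<partial>lborel) + (\<integral>\<^sup>+x. ennreal C * h (0 + (-1) * x) \<partial>lborel)"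
      by (rule nn_integral_add) auto
    also have "(\<integral>\<^sup>+x. indicator {-1..1} x + ennreal C * h x \<partial>lborel) = (\<integral>\<^sup>+x. indicator {-1..1} (x::real) \<partial>lborel) + (\<integral>\<^sup>+x. ennreal C * h x \<partial>lborel)"
      by (intro nn_integral_add) auto
    also have "(\<integral>\<^sup>+x. ennreal C * h x \<partial>lborel) = ennreal C * (\<integral>\<^sup>+x. h x \<partial>lborel)"
      by (rule nn_integral_cmult) auto
    also have "(\<integral>\<^sup>+x. ennreal C * h (0 + (-1) * x) \<partial>lborel) = ennreal C * (\<integral>\<^sup>+x. h (0 + (-1) * x) \<partial>lborel)"
      by (rule nn_integral_cmult) auto
    finally show ?thesis .
  qed
  also have "(\<integral>\<^sup>+x. h (0 + (-1) * x) \<partial>lborel) = (\<integral>\<^sup>+x. h x \<partial>lborel)"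
    using nn_integral_real_affine[OF h_meas, of "-1" 0] by simp
  also have "(\<integral>\<^sup>+x. h x \<partial>lborel) = 1" unfolding h_def by (rule nn_int_inv_sq)
  also have "(\<integral>\<^sup>+x. indicator {-1..1} (x::real) \<partial>lborel) = emeasure lborel {-1..(1::real)}"
    by simp
  also have "emeasure lborel {-1..(1::real)} = 2" by simp
  finally have "(\<integral>\<^sup>+x. ennreal (exp (- k * \<bar>x\<bar> powr a)) \<partial>lborel) \<le> 2 + ennreal C + ennreal C" by simp
  also have "\<dots> < \<infinity>" by (simp add: less_top[symmetric])
  finally show ?thesis .
qed

lemma integrable_exp_norm_powr:
  fixes k a :: real
  assumes "k > 0" "a > 0"
  shows "integrable lborel (\<lambda>\<xi>::'a::euclidean_space. exp (- k * norm \<xi> powr a))"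
proof (rule integrableI_bounded)
  show "(\<lambda>\<xi>::'a. exp (- k * norm \<xi> powr a)) \<in> borel_measurable lborel" by measurable
  define d where "d = real DIM('a)"
  have dpos: "d > 0" unfolding d_def by simp
  define f :: "'a \<Rightarrow> real \<Rightarrow> ennreal" where "f b y = ennreal (exp (- (k / d) * \<bar>y\<bar> powr a))" for b y
  have pw: "ennreal (norm (exp (- k * norm \<xi> powr a))) \<le> (\<Prod>b\<in>Basis. f b (\<xi> \<bullet> b))" for \<xi> :: 'a
  proof -
    have "(\<Sum>b\<in>(Basis::'a set). (k / d) * \<bar>\<xi> \<bullet> b\<bar> powr a) \<le> (\<Sum>b\<in>(Basis::'a set). (k / d) * norm \<xi> powr a)"
      using assms dpos by (intro sum_mono mult_left_mono powr_mono2) (auto simp: Basis_le_norm)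
    also have "\<dots> = k * norm \<xi> powr a" using dpos by (simp add: d_def)
    finally have s: "(\<Sum>b\<in>(Basis::'a set). (k / d) * \<bar>\<xi> \<bullet> b\<bar> powr a) \<le> k * norm \<xi> powr a" .
    have "exp (- k * norm \<xi> powr a) \<le> exp (\<Sum>b\<in>(Basis::'a set). - (k / d) * \<bar>\<xi> \<bullet> b\<bar> powr a)"
      using s by (simp add: sum_negf)
    also have "\<dots> = (\<Prod>b\<in>(Basis::'a set). exp (- (k / d) * \<bar>\<xi> \<bullet> b\<bar> powr a))"
      by (simp add: exp_sum)
    finally have "ennreal (exp (- k * norm \<xi> powr a)) \<le> ennreal (\<Prod>b\<in>(Basis::'a set). exp (- (k / d) * \<bar>\<xi> \<bullet> b\<bar> powr a))"
      by (rule ennreal_leI)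
    also have "\<dots> = (\<Prod>b\<in>Basis. f b (\<xi> \<bullet> b))" unfolding f_def by (simp add: prod_ennreal)
    finally show ?thesis by simp
  qed
  have "(\<integral>\<^sup>+\<xi>. ennreal (norm (exp (- k * norm (\<xi>::'a) powr a))) \<partial>lborel) \<le> (\<integral>\<^sup>+\<xi>. (\<Prod>b\<in>Basis. f b (\<xi> \<bullet> b)) \<partial>lborel)"
    by (rule nn_integral_mono) (rule pw)
  also have "\<dots> = (\<Prod>b\<in>(Basis::'a set). (\<integral>\<^sup>+y. f b y \<partial>lborel))"
    by (rule nn_integral_lborel_prod) (auto simp: f_def)
  also have "\<dots> < \<infinity>"
    using int1d_finite[of "k / d" a] assms dpos unfolding f_def
    by (simp add: power_less_top_ennreal)
  finally show "(\<integral>\<^sup>+\<xi>. ennreal (norm (exp (- k * norm (\<xi>::'a) powr a))) \<partial>lborel) < \<infinity>" .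
qed

lemma integral_scale:
  fixes f :: "'a::euclidean_space \<Rightarrow> real" and c :: real
  assumes c: "c > 0" and fm[measurable]: "f \<in> borel_measurable borel" and fi: "integrable lborel f"
  shows "integral\<^sup>L lborel f = c ^ DIM('a) * integral\<^sup>L lborel (\<lambda>x. f (c *\<^sub>R x))"
proof -
  have eq: "lborel = density (distr lborel borel (\<lambda>x. (0::'a) + c *\<^sub>R x)) (\<lambda>_. \<bar>c\<bar>^DIM('a))"
    using lborel_affine[of c 0] c by simp
  have "integral\<^sup>L lborel f = integral\<^sup>L (density (distr lborel borel (\<lambda>x. (0::'a) + c *\<^sub>R x)) (\<lambda>_. \<bar>c\<bar>^DIM('a))) f"
    by (simp only: eq[symmetric])
  also have "\<dots> = integral\<^sup>L (distr lborel borel (\<lambda>x. (0::'a) + c *\<^sub>R x)) (\<lambda>x. \<bar>c\<bar>^DIM('a) *\<^sub>R f x)"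
    by (rule integral_density) auto
  also have "\<dots> = integral\<^sup>L lborel (\<lambda>x. \<bar>c\<bar>^DIM('a) *\<^sub>R f (0 + c *\<^sub>R x))"
    by (rule integral_distr) auto
  also have "\<dots> = c ^ DIM('a) * integral\<^sup>L lborel (\<lambda>x. f (c *\<^sub>R x))"
    using c by simp
  finally show ?thesis .
qed

lemma cos_lower: "1 - u^2 / 2 \<le> cos (u::real)"
proof -
  have "cos u = cos (2 * (u / 2))" by simp
  also have "\<dots> = 1 - 2 * sin (u/2) ^ 2" by (rule cos_double_sin)
  finally have e: "cos u = 1 - 2 * sin (u/2) ^ 2" .
  have "sin (u/2) ^ 2 \<le> (u/2) ^ 2"
    using abs_sin_x_le_abs_x[of "u/2"] by (metis abs_ge_zero power2_abs power_mono)
  then show ?thesis using e by (simp add: power_divide)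
qed

lemma stable_lower:
  fixes \<alpha> :: real
  assumes a: "\<alpha> > 0"
  shows "\<exists>\<delta>>0. \<exists>C>0. \<forall>s>0. \<forall>z::'a::euclidean_space. norm z \<le> \<delta> * s powr (1/\<alpha>) \<longrightarrow>
            C * s powr (- real DIM('a) / \<alpha>) \<le> stable_density \<alpha> s z"
proof -
  define E :: "'a \<Rightarrow> real" where "E \<xi> = exp (- (norm \<xi> powr \<alpha>))" for \<xi>
  have E_meas[measurable]: "E \<in> borel_measurable borel" unfolding E_def by measurable
  have E_int: "integrable lborel E"
    using integrable_exp_norm_powr[of 1 \<alpha>, where 'a='a] a unfolding E_def by simp
  have E_nn: "0 \<le> E \<xi>" for \<xi> unfolding E_def by simp
  obtain C2 where C2: "C2 > 0" "\<And>u. u \<ge> 0 \<Longrightarrow> u powr 2 \<le> C2 * exp ((1/2) * u powr \<alpha>)"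
    using poly_exp_bound[of "1/2" \<alpha> 2] a by auto
  have E2_int: "integrable lborel (\<lambda>\<xi>. norm \<xi> ^ 2 * E \<xi>)"
  proof (rule Bochner_Integration.integrable_bound)
    show "integrable lborel (\<lambda>\<xi>::'a. C2 * exp (- (1/2) * norm \<xi> powr \<alpha>))"
      using integrable_exp_norm_powr[of "1/2" \<alpha>, where 'a='a] a by simp
    show "(\<lambda>\<xi>. norm \<xi> ^ 2 * E \<xi>) \<in> borel_measurable lborel" by measurable
    show "AE \<xi> in lborel. norm (norm \<xi> ^ 2 * E \<xi>) \<le> norm (C2 * exp (- (1/2) * norm (\<xi>::'a) powr \<alpha>))"
    proof (rule AE_I2)
      fix \<xi> :: 'a
      have n2: "norm \<xi> ^ 2 \<le> C2 * exp ((1/2) * norm \<xi> powr \<alpha>)"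
        using C2(2)[of "norm \<xi>"] by (cases "\<xi> = 0") (auto simp: powr_realpow)
      have "norm \<xi> ^ 2 * E \<xi> \<le> C2 * exp ((1/2) * norm \<xi> powr \<alpha>) * E \<xi>"
        by (intro mult_right_mono n2 E_nn)
      also have "\<dots> = C2 * exp (- (1/2) * norm \<xi> powr \<alpha>)"
        unfolding E_def by (simp add: mult.assoc exp_add[symmetric])
      finally show "norm (norm \<xi> ^ 2 * E \<xi>) \<le> norm (C2 * exp (- (1/2) * norm (\<xi>::'a) powr \<alpha>))"
        using C2 E_nn by simp
    qed
  qed
  define I0 where "I0 = integral\<^sup>L lborel E"
  define I2 where "I2 = integral\<^sup>L lborel (\<lambda>\<xi>. norm \<xi> ^ 2 * E \<xi>)"
  have I2_nn: "I2 \<ge> 0" unfolding I2_def by (rule integral_nonneg_AE) (auto simp: E_nn)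
  have I0_pos: "I0 > 0"
  proof -
    have cb: "emeasure lborel (cball (0::'a) 1) < \<infinity>" by (simp add: emeasure_cball)
    have "integral\<^sup>L lborel (\<lambda>\<xi>::'a. exp (-1::real) * indicator (cball 0 1) \<xi>) \<le> I0"
      unfolding I0_def
    proof (rule integral_mono)
      show "integrable lborel (\<lambda>\<xi>::'a. exp (-1::real) * indicator (cball 0 1) \<xi>)"
      proof -
        have "integrable lborel (indicator (cball (0::'a) 1) :: 'a \<Rightarrow> real)"
          using cb by (intro integrable_real_indicator) auto
        then show ?thesis by (rule integrable_mult_right)
      qed
      show "integrable lborel E" by (rule E_int)
      fix \<xi> :: 'a
      show "exp (-1::real) * indicator (cball 0 1) \<xi> \<le> E \<xi>"
      proof (cases "\<xi> \<in> cball 0 1")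
        case True
        then have "norm \<xi> powr \<alpha> \<le> 1" using a powr_mono2[of \<alpha> "norm \<xi>" 1] by simp
        then show ?thesis using True unfolding E_def by simp
      qed (simp add: E_nn)
    qed
    moreover have "integral\<^sup>L lborel (\<lambda>\<xi>::'a. exp (-1::real) * indicator (cball 0 1) \<xi>) = exp (-1) * measure lborel (cball (0::'a) 1)"
      by simp
    moreover have "measure lborel (cball (0::'a) 1) > 0"
      using content_cball[where c="0::'a" and r=1] by simp
    ultimately show ?thesis by (smt (verit) exp_gt_zero mult_pos_pos)
  qed
  define \<delta> where "\<delta> = sqrt (I0 / (I2 + 1))"
  have \<delta>_pos: "\<delta> > 0" unfolding \<delta>_def using I0_pos I2_nn by simp
  have J: "integral\<^sup>L lborel (\<lambda>\<xi>. cos (\<xi> \<bullet> w) * E \<xi>) \<ge> I0 / 2" if w: "norm w \<le> \<delta>" for w :: 'a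
  proof -
    have int_cos: "integrable lborel (\<lambda>\<xi>. cos (\<xi> \<bullet> w) * E \<xi>)"
    proof (rule Bochner_Integration.integrable_bound[OF E_int])
      show "(\<lambda>\<xi>. cos (\<xi> \<bullet> w) * E \<xi>) \<in> borel_measurable lborel" by measurable
      show "AE \<xi> in lborel. norm (cos (\<xi> \<bullet> w) * E \<xi>) \<le> norm (E \<xi>)"
        by (rule AE_I2) (auto simp: abs_mult E_nn intro!: mult_left_le_one_le)
    qed
    have int_low: "integrable lborel (\<lambda>\<xi>. E \<xi> - (norm w ^ 2 / 2) * (norm \<xi> ^ 2 * E \<xi>))"
      using E_int E2_int by auto
    have "integral\<^sup>L lborel (\<lambda>\<xi>. E \<xi> - (norm w ^ 2 / 2) * (norm \<xi> ^ 2 * E \<xi>))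
          \<le> integral\<^sup>L lborel (\<lambda>\<xi>. cos (\<xi> \<bullet> w) * E \<xi>)"
    proof (rule integral_mono[OF int_low int_cos])
      fix \<xi> :: 'a
      have cs: "(\<xi> \<bullet> w) ^ 2 \<le> (norm \<xi> * norm w) ^ 2"
        using Cauchy_Schwarz_ineq2[of \<xi> w] by (metis abs_ge_zero power2_abs power_mono)
      have "1 - (norm w ^ 2 / 2) * norm \<xi> ^ 2 \<le> 1 - (\<xi> \<bullet> w) ^ 2 / 2"
        using cs by (simp add: power_mult_distrib mult.commute)
      also have "\<dots> \<le> cos (\<xi> \<bullet> w)" by (rule cos_lower)
      finally have "(1 - (norm w ^ 2 / 2) * norm \<xi> ^ 2) * E \<xi> \<le> cos (\<xi> \<bullet> w) * E \<xi>"
        by (intro mult_right_mono E_nn)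
      then show "E \<xi> - (norm w ^ 2 / 2) * (norm \<xi> ^ 2 * E \<xi>) \<le> cos (\<xi> \<bullet> w) * E \<xi>"
        by (simp add: algebra_simps)
    qed
    moreover have "integral\<^sup>L lborel (\<lambda>\<xi>. E \<xi> - (norm w ^ 2 / 2) * (norm \<xi> ^ 2 * E \<xi>)) = I0 - (norm w ^ 2 / 2) * I2"
      unfolding I0_def I2_def using E_int E2_int by simp
    moreover have "(norm w ^ 2 / 2) * I2 \<le> I0 / 2"
    proof -
      have "norm w ^ 2 \<le> \<delta> ^ 2" using w by (simp add: power_mono)
      also have "\<delta> ^ 2 = I0 / (I2 + 1)" unfolding \<delta>_def using I0_pos I2_nn by simp
      finally have "norm w ^ 2 * I2 \<le> I0 / (I2 + 1) * I2" using I2_nn by (rule mult_right_mono)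
      also have "\<dots> \<le> I0" using I0_pos I2_nn by (simp add: field_simps)
      finally show ?thesis by simp
    qed
    ultimately show ?thesis by linarith
  qed
  define C where "C = (2 * pi) powr (- real DIM('a)) * (I0 / 2)"
  have Cpos: "C > 0" unfolding C_def using I0_pos by simp
  have "C * s powr (- real DIM('a) / \<alpha>) \<le> stable_density \<alpha> s z"
    if s: "s > 0" and z: "norm z \<le> \<delta> * s powr (1/\<alpha>)" for s and z :: 'a
  proof -
    define c where "c = s powr (- 1 / \<alpha>)"
    have cpos: "c > 0" unfolding c_def using s by simp
    define f where "f \<xi> = cos (\<xi> \<bullet> z) * exp (- s * norm \<xi> powr \<alpha>)" for \<xi> :: 'a
    have fm: "f \<in> borel_measurable borel" unfolding f_def by measurable
    have fi: "integrable lborel f"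
    proof (rule Bochner_Integration.integrable_bound)
      show "integrable lborel (\<lambda>\<xi>::'a. exp (- s * norm \<xi> powr \<alpha>))"
        by (rule integrable_exp_norm_powr) (use s a in auto)
      show "f \<in> borel_measurable lborel" unfolding f_def by measurable
      show "AE \<xi> in lborel. norm (f \<xi>) \<le> norm (exp (- s * norm \<xi> powr \<alpha>))"
        unfolding f_def by (rule AE_I2) (auto simp: abs_mult intro!: mult_left_le_one_le)
    qed
    have sc: "s * c powr \<alpha> = 1"
    proof -
      have "c powr \<alpha> = s powr (- 1 / \<alpha> * \<alpha>)" unfolding c_def by (simp add: powr_powr)
      also have "- 1 / \<alpha> * \<alpha> = -1" using a by simp
      finally show ?thesis using s by (simp add: powr_minus field_simps)
    qed
    have fc: "f (c *\<^sub>R \<xi>) = cos (\<xi> \<bullet> (c *\<^sub>R z)) * E \<xi>" for \<xi>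
    proof -
      have "s * norm (c *\<^sub>R \<xi>) powr \<alpha> = (s * c powr \<alpha>) * norm \<xi> powr \<alpha>"
        using cpos by (simp add: powr_mult)
      then show ?thesis unfolding f_def E_def using sc by simp
    qed
    have cd: "c ^ DIM('a) = s powr (- real DIM('a) / \<alpha>)"
      unfolding c_def using s by (simp add: powr_realpow[symmetric] powr_powr)
    have wz: "norm (c *\<^sub>R z) \<le> \<delta>"
    proof -
      have "norm (c *\<^sub>R z) = c * norm z" using cpos by simp
      also have "\<dots> \<le> c * (\<delta> * s powr (1/\<alpha>))" using cpos z by (intro mult_left_mono) auto
      also have "\<dots> = \<delta> * (c * s powr (1/\<alpha>))" by simp
      also have "c * s powr (1/\<alpha>) = 1" unfolding c_def using s by (simp add: powr_add[symmetric])
      finally show ?thesis by simp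
    qed
    have "stable_density \<alpha> s z = (2 * pi) powr (- real DIM('a)) * integral\<^sup>L lborel f"
      unfolding stable_density_def f_def by simp
    also have "integral\<^sup>L lborel f = c ^ DIM('a) * integral\<^sup>L lborel (\<lambda>\<xi>. f (c *\<^sub>R \<xi>))"
      by (rule integral_scale[OF cpos fm fi])
    also have "integral\<^sup>L lborel (\<lambda>\<xi>. f (c *\<^sub>R \<xi>)) = integral\<^sup>L lborel (\<lambda>\<xi>. cos (\<xi> \<bullet> (c *\<^sub>R z)) * E \<xi>)"
      by (simp add: fc)
    finally have eq: "stable_density \<alpha> s z = (2 * pi) powr (- real DIM('a)) * (s powr (- real DIM('a) / \<alpha>) *
         integral\<^sup>L lborel (\<lambda>\<xi>. cos (\<xi> \<bullet> (c *\<^sub>R z)) * E \<xi>))" by (simp add: cd)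
    have "C * s powr (- real DIM('a) / \<alpha>) = (2 * pi) powr (- real DIM('a)) * (s powr (- real DIM('a) / \<alpha>) * (I0 / 2))"
      unfolding C_def by simp
    also have "\<dots> \<le> (2 * pi) powr (- real DIM('a)) * (s powr (- real DIM('a) / \<alpha>) *
         integral\<^sup>L lborel (\<lambda>\<xi>. cos (\<xi> \<bullet> (c *\<^sub>R z)) * E \<xi>))"
      using J[OF wz] by (intro mult_left_mono) auto
    finally show ?thesis using eq by simp
  qed
  then show ?thesis using \<delta>_pos Cpos by blast
qed

lemma sub_mass:
  fixes \<beta> \<epsilon> :: real and g :: "real \<Rightarrow> real"
  assumes sd: "is_subordinator_density \<beta> g" and b: "0 < \<beta>" "\<beta> < 1" and e: "\<epsilon> > 0"
  shows "\<exists>a b m. 0 < a \<and> a \<le> b \<and> b \<le> \<epsilon> \<and> m > 0 \<and>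
           ennreal m \<le> (\<integral>\<^sup>+u. indicator {a..b} u * ennreal (g u) \<partial>lborel)"
proof (rule ccontr)
  assume contra: "\<not> ?thesis"
  have gm[measurable]: "g \<in> borel_measurable borel" using sd unfolding is_subordinator_density_def by auto
  have gnn: "\<And>u. 0 \<le> g u" and g0: "\<And>u. u \<le> 0 \<Longrightarrow> g u = 0"
    using sd unfolding is_subordinator_density_def by auto
  have lap: "\<And>s. s > 0 \<Longrightarrow> (\<integral>\<^sup>+ u. ennreal (exp (- s * u) * g u) \<partial>lborel) = ennreal (exp (- (s powr \<beta>)))"
    using sd unfolding is_subordinator_density_def by auto
  have zero: "(\<integral>\<^sup>+u. indicator {\<epsilon> / Suc n..\<epsilon>} u * ennreal (g u) \<partial>lborel) = 0" for n :: nat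
  proof (rule ccontr)
    assume nz: "(\<integral>\<^sup>+u. indicator {\<epsilon> / Suc n..\<epsilon>} u * ennreal (g u) \<partial>lborel) \<noteq> 0"
    then have "0 < (\<integral>\<^sup>+u. indicator {\<epsilon> / Suc n..\<epsilon>} u * ennreal (g u) \<partial>lborel)"
      by (simp add: zero_less_iff_neq_zero)
    then obtain x where x: "0 < x" "x < (\<integral>\<^sup>+u. indicator {\<epsilon> / Suc n..\<epsilon>} u * ennreal (g u) \<partial>lborel)"
      using dense by blast
    then obtain m where "x = ennreal m" "m \<ge> 0" by (cases x) auto
    then have "m > 0" "ennreal m \<le> (\<integral>\<^sup>+u. indicator {\<epsilon> / Suc n..\<epsilon>} u * ennreal (g u) \<partial>lborel)"
      using x by auto
    moreover have "0 < \<epsilon> / Suc n" "\<epsilon> / Suc n \<le> \<epsilon>" using e by (auto simp: field_simps)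
    ultimately show False using contra e by blast
  qed
  have "AE u in lborel. indicator {\<epsilon> / Suc n..\<epsilon>} u * ennreal (g u) = 0" for n :: nat
    using zero[of n] by (subst (asm) nn_integral_0_iff_AE) auto
  then have "AE u in lborel. \<forall>n::nat. indicator {\<epsilon> / Suc n..\<epsilon>} u * ennreal (g u) = 0"
    by (subst AE_all_countable) blast
  then have AEz: "AE u in lborel. u \<le> \<epsilon> \<longrightarrow> g u = 0"
  proof (rule AE_mp, intro AE_I2 impI)
    fix u assume H: "\<forall>n::nat. indicator {\<epsilon> / Suc n..\<epsilon>} u * ennreal (g u) = 0" and ue: "u \<le> \<epsilon>"
    show "g u = 0"
    proof (cases "u > 0")
      case True
      obtain n :: nat where n: "\<epsilon> / u < real (Suc n)"
        using reals_Archimedean2[of "\<epsilon> / u"] by (metis of_nat_Suc less_Suc_eq_le linorder_not_less not_less_eq_eq of_nat_le_iff order_trans less_imp_le)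
      then have "\<epsilon> / Suc n \<le> u" using True e by (simp add: field_simps)
      then have "ennreal (g u) = 0" using H[rule_format, of n] ue by simp
      then show ?thesis using gnn[of u] by simp
    qed (simp add: g0)
  qed
  define s where "s = max 2 ((2 / \<epsilon>) powr (1 / (1 - \<beta>)))"
  have s2: "s \<ge> 2" unfolding s_def by simp
  have spos: "s > 0" using s2 by simp
  have "ennreal (exp (- (s powr \<beta>))) = (\<integral>\<^sup>+ u. ennreal (exp (- s * u) * g u) \<partial>lborel)"
    using lap[OF spos] by simp
  also have "\<dots> = (\<integral>\<^sup>+ u. indicator {\<epsilon><..} u * ennreal (exp (- s * u) * g u) \<partial>lborel)"
    by (rule nn_integral_cong_AE) (use AEz in \<open>auto simp: indicator_def\<close>)
  also have "\<dots> \<le> (\<integral>\<^sup>+ u. ennreal (exp (- (s - 1) * \<epsilon>)) * ennreal (exp (- 1 * u) * g u) \<partial>lborel)"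
  proof (rule nn_integral_mono)
    fix u
    show "indicator {\<epsilon><..} u * ennreal (exp (- s * u) * g u) \<le> ennreal (exp (- (s - 1) * \<epsilon>)) * ennreal (exp (- 1 * u) * g u)"
    proof (cases "u > \<epsilon>")
      case True
      have "exp (- s * u) = exp (- (s - 1) * u) * exp (- 1 * u)" by (simp add: exp_add[symmetric] algebra_simps)
      also have "\<dots> \<le> exp (- (s - 1) * \<epsilon>) * exp (- 1 * u)"
        using True s2 by (intro mult_right_mono) (auto simp: mult_le_cancel_left)
      finally have "exp (- s * u) * g u \<le> exp (- (s - 1) * \<epsilon>) * (exp (- 1 * u) * g u)"
        using gnn[of u] by (metis mult.assoc mult_right_mono)
      then show ?thesis using True gnn[of u] by (simp add: ennreal_mult'[symmetric] ennreal_leI)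
    qed simp
  qed
  also have "\<dots> = ennreal (exp (- (s - 1) * \<epsilon>)) * (\<integral>\<^sup>+ u. ennreal (exp (- 1 * u) * g u) \<partial>lborel)"
    by (rule nn_integral_cmult) auto
  also have "\<dots> = ennreal (exp (- (s - 1) * \<epsilon>) * exp (- 1))"
    using lap[of 1] by (simp add: ennreal_mult)
  finally have "exp (- (s powr \<beta>)) \<le> exp (- (s - 1) * \<epsilon>) * exp (- 1)"
    by (subst (asm) ennreal_le_iff) auto
  then have ineq: "(s - 1) * \<epsilon> + 1 \<le> s powr \<beta>"
    using exp_add[symmetric] by (smt (verit) exp_le_cancel_iff left_diff_distrib mult_minus_left)
  have "s powr (1 - \<beta>) \<ge> 2 / \<epsilon>"
  proof -
    have "(2 / \<epsilon>) = ((2 / \<epsilon>) powr (1 / (1 - \<beta>))) powr (1 - \<beta>)"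
      using e b by (simp add: powr_powr)
    also have "\<dots> \<le> s powr (1 - \<beta>)" unfolding s_def using b e by (intro powr_mono2) auto
    finally show ?thesis .
  qed
  then have "s powr \<beta> * (2 / \<epsilon>) \<le> s powr \<beta> * s powr (1 - \<beta>)" by (intro mult_left_mono) auto
  also have "\<dots> = s" using spos by (simp add: powr_add[symmetric])
  finally have "s powr \<beta> \<le> s * \<epsilon> / 2" using e by (simp add: field_simps)
  moreover have "s * \<epsilon> \<ge> 2 * \<epsilon>" using s2 e by (intro mult_right_mono) auto
  moreover have "(s - 1) * \<epsilon> = s * \<epsilon> - \<epsilon>" by (simp add: algebra_simps)
  ultimately show False using ineq e by linarith
qed

lemma kernel_lower:
  fixes \<alpha> \<beta> :: real and g :: "real \<Rightarrow> real"
  assumes a: "\<alpha> > 0" and b: "0 < \<beta>" "\<beta> < 1" and sd: "is_subordinator_density \<beta> g"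
  shows "\<forall>R>0. \<exists>c>0. \<forall>\<tau>>0. \<forall>z::'a::euclidean_space. norm z \<le> R * \<tau> powr (\<beta>/\<alpha>) \<longrightarrow>
           ennreal (c * \<tau> powr (- (real DIM('a) * (\<beta>/\<alpha>)))) \<le> Gker \<alpha> \<beta> g \<tau> z"
proof (intro allI impI)
  fix R :: real assume R: "R > 0"
  define \<rho> where "\<rho> = \<beta> / \<alpha>"
  define \<gamma> where "\<gamma> = real DIM('a) * \<rho>"
  have \<rho>pos: "\<rho> > 0" unfolding \<rho>_def using a b by simp
  have \<gamma>pos: "\<gamma> > 0" unfolding \<gamma>_def using \<rho>pos by simp
  have gm[measurable]: "g \<in> borel_measurable borel" using sd unfolding is_subordinator_density_def by auto
  have gnn: "\<And>u. 0 \<le> g u" using sd unfolding is_subordinator_density_def by auto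
  obtain \<delta> C where \<delta>: "\<delta> > 0" and C: "C > 0" and
    p: "\<And>s z. s > 0 \<Longrightarrow> norm (z::'a) \<le> \<delta> * s powr (1/\<alpha>) \<Longrightarrow> C * s powr (- real DIM('a) / \<alpha>) \<le> stable_density \<alpha> s z"
    using stable_lower[OF a, where 'a='a] by blast
  define \<epsilon> where "\<epsilon> = (\<delta> / R) powr (1 / \<rho>)"
  have epos: "\<epsilon> > 0" unfolding \<epsilon>_def using \<delta> R by simp
  have erho: "\<epsilon> powr (- \<rho>) = R / \<delta>"
    unfolding \<epsilon>_def using \<delta> R \<rho>pos by (simp add: powr_powr powr_minus_divide)
  obtain a0 b0 m where ab: "0 < a0" "a0 \<le> b0" "b0 \<le> \<epsilon>" and m: "m > 0"
    and mI: "ennreal m \<le> (\<integral>\<^sup>+u. indicator {a0..b0} u * ennreal (g u) \<partial>lborel)"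
    using sub_mass[OF sd b epos] by blast
  define c where "c = C * a0 powr \<gamma> * m"
  have cpos: "c > 0" unfolding c_def using C ab m by simp
  have "ennreal (c * \<tau> powr (- \<gamma>)) \<le> Gker \<alpha> \<beta> g \<tau> z"
    if \<tau>: "\<tau> > 0" and z: "norm z \<le> R * \<tau> powr \<rho>" for \<tau> and z :: 'a
  proof -
    define K where "K = C * a0 powr \<gamma> * \<tau> powr (- \<gamma>)"
    have Knn: "K \<ge> 0" unfolding K_def using C by simp
    have pw: "indicator {a0..b0} u * (ennreal K * ennreal (g u))
        \<le> indicator {0<..} u * ennreal (stable_density \<alpha> ((\<tau> / u) powr \<beta>) z * g u)" for u
    proof (cases "u \<in> {a0..b0}")
      case True
      then have u: "a0 \<le> u" "u \<le> b0" "u > 0" using ab by auto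
      define s where "s = (\<tau> / u) powr \<beta>"
      have spos: "s > 0" unfolding s_def using \<tau> u by simp
      have s1: "s powr (1/\<alpha>) = \<tau> powr \<rho> * u powr (- \<rho>)"
        unfolding s_def \<rho>_def using \<tau> u by (simp add: powr_powr powr_divide powr_minus_divide)
      have "u powr (- \<rho>) \<ge> \<epsilon> powr (- \<rho>)"
        using u ab \<rho>pos epos by (intro powr_mono2') auto
      then have "u powr (- \<rho>) \<ge> R / \<delta>" using erho by simp
      then have "\<delta> * s powr (1/\<alpha>) \<ge> \<delta> * (\<tau> powr \<rho> * (R / \<delta>))"
        unfolding s1 using \<delta> \<tau> by (intro mult_left_mono) auto
      also have "\<delta> * (\<tau> powr \<rho> * (R / \<delta>)) = R * \<tau> powr \<rho>" using \<delta> by simp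
      finally have zs: "norm z \<le> \<delta> * s powr (1/\<alpha>)" using z by simp
      have "s powr (- real DIM('a) / \<alpha>) = u powr \<gamma> * \<tau> powr (- \<gamma>)"
        unfolding s_def \<gamma>_def \<rho>_def using \<tau> u a
        by (simp add: powr_powr powr_divide powr_minus_divide field_simps)
      moreover have "u powr \<gamma> \<ge> a0 powr \<gamma>" using u ab \<gamma>pos by (intro powr_mono2) auto
      ultimately have "K \<le> C * s powr (- real DIM('a) / \<alpha>)"
        unfolding K_def using C \<tau> by (simp add: mult_right_mono mult.assoc)
      also have "\<dots> \<le> stable_density \<alpha> s z" by (rule p[OF spos zs])
      finally have "K * g u \<le> stable_density \<alpha> s z * g u" using gnn by (intro mult_right_mono) auto
      then show ?thesis using True u Knn gnn[of u] unfolding s_def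
        by (simp add: ennreal_mult'[symmetric] ennreal_leI)
    qed simp
    have "ennreal (c * \<tau> powr (- \<gamma>)) = ennreal K * ennreal m"
      unfolding c_def K_def using C ab m by (simp add: ennreal_mult'[symmetric] mult_ac)
    also have "\<dots> \<le> ennreal K * (\<integral>\<^sup>+u. indicator {a0..b0} u * ennreal (g u) \<partial>lborel)"
      by (intro mult_left_mono mI) auto
    also have "\<dots> = (\<integral>\<^sup>+u. ennreal K * (indicator {a0..b0} u * ennreal (g u)) \<partial>lborel)"
      by (rule nn_integral_cmult[symmetric]) auto
    also have "\<dots> \<le> Gker \<alpha> \<beta> g \<tau> z"
      unfolding Gker_def by (rule nn_integral_mono) (use pw in \<open>simp add: mult_ac\<close>)
    finally show ?thesis .
  qed
  then show "\<exists>c>0. \<forall>\<tau>>0. \<forall>z::'a. norm z \<le> R * \<tau> powr (\<beta>/\<alpha>) \<longrightarrow>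
           ennreal (c * \<tau> powr (- (real DIM('a) * (\<beta>/\<alpha>)))) \<le> Gker \<alpha> \<beta> g \<tau> z"
    using cpos unfolding \<gamma>_def \<rho>_def by blast
qed

definition lowP :: "(real \<Rightarrow> 'a::euclidean_space \<Rightarrow> ennreal) \<Rightarrow> real \<Rightarrow> real \<Rightarrow> real \<Rightarrow> real \<Rightarrow> bool" where
  "lowP V \<rho> \<gamma> T L \<longleftrightarrow> (\<forall>t\<ge>T. \<forall>x. norm x \<le> t powr \<rho> \<longrightarrow> ennreal (L * t powr (- \<gamma>)) \<le> V t x)"

lemma enn_powr_mono:
  assumes "0 \<le> r" "ennreal r \<le> v" "q > 0"
  shows "ennreal (r powr q) \<le> enn_powr v q"
proof (cases "v = \<infinity>")
  case True then show ?thesis by (simp add: enn_powr_def)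
next
  case False
  then have v: "v = ennreal (enn2real v)" by (simp add: less_top[symmetric] ennreal_enn2real)
  have "r \<le> enn2real v" using assms(2) v assms(1) by (metis enn2real_nonneg ennreal_le_iff)
  then have "r powr q \<le> enn2real v powr q" using assms by (intro powr_mono2) auto
  then show ?thesis using False by (simp add: enn_powr_def ennreal_leI)
qed

lemma nn_integral_inv_interval:
  assumes "0 < a" "a \<le> b"
  shows "(\<integral>\<^sup>+s. indicator {a..b} s * ennreal (1 / s) \<partial>lborel) = ennreal (ln b - ln a)"
proof -
  have "((\<lambda>s. 1 / s) has_integral (ln b - ln a)) {a..b}"
  proof (rule fundamental_theorem_of_calculus[OF assms(2)])
    fix x assume x: "x \<in> {a..b}"
    then have "x > 0" using assms by auto
    then have "(ln has_real_derivative (1 / x)) (at x within {a..b})"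
      by (auto intro!: derivative_eq_intros)
    then show "(ln has_vector_derivative (1 / x)) (at x within {a..b})"
      by (simp add: has_real_derivative_iff_has_vector_derivative)
  qed
  from nn_integral_has_integral_lebesgue'[OF _ this] assms
  show ?thesis by (simp add: mult.commute)
qed

lemma step_lemma:
  fixes V :: "real \<Rightarrow> 'a::euclidean_space \<Rightarrow> ennreal" and Gk :: "real \<Rightarrow> 'a \<Rightarrow> ennreal"
  assumes rho: "\<rho> > 0" and gam: "\<gamma> = real DIM('a) * \<rho>" and eta: "\<eta> > 0" "\<eta> * \<gamma> \<le> 1"
    and c: "c > 0"
    and G: "\<And>\<tau> z. \<tau> > 0 \<Longrightarrow> norm z \<le> (2 * 2 powr \<rho>) * \<tau> powr \<rho> \<Longrightarrow> ennreal (c * \<tau> powr (- \<gamma>)) \<le> Gk \<tau> z"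
    and Veq: "\<And>t x. 0 < t \<Longrightarrow> (\<integral>\<^sup>+ y. (\<integral>\<^sup>+ s. indicator {0<..<t} s * (Gk (t - s) (x - y) * enn_powr (V s y) (1 + \<eta>)) \<partial>lborel) \<partial>lborel) \<le> V t x"
    and T: "T \<ge> 1" and L: "L \<ge> 0" and k: "k \<ge> 0" and P: "lowP V \<rho> \<gamma> T L"
  shows "lowP V \<rho> \<gamma> (2 * exp k * T) (c * unit_ball_vol (real DIM('a)) * k * L powr (1 + \<eta>))"
  unfolding lowP_def
proof (intro allI impI)
  fix t :: real and x :: 'a
  assume t: "2 * exp k * T \<le> t" and x: "norm x \<le> t powr \<rho>"
  have gpos: "\<gamma> > 0" using gam rho by simp
  define \<omega> where "\<omega> = unit_ball_vol (real DIM('a))"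
  have \<omega>pos: "\<omega> > 0" unfolding \<omega>_def by simp
  have ek: "exp k \<ge> 1" using k by simp
  have "2 * T * 1 \<le> 2 * T * exp k" using ek T by (intro mult_left_mono) auto
  then have t2T: "t \<ge> 2 * T" using t by (simp add: mult_ac)
  have tpos: "t > 0" using t2T T by simp
  define F where "F s = c * t powr (- \<gamma>) * (L * s powr (- \<gamma>)) powr (1 + \<eta>)" for s
  define f where "f y s = indicator {p. T \<le> snd p \<and> snd p \<le> t / 2 \<and> norm (fst p) \<le> snd p powr \<rho>} (y, s) * ennreal (F s)"
    for y :: 'a and s :: real
  have pw: "f y s \<le> indicator {0<..<t} s * (Gk (t - s) (x - y) * enn_powr (V s y) (1 + \<eta>))" for y s
  proof (cases "T \<le> s \<and> s \<le> t / 2 \<and> norm y \<le> s powr \<rho>")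
    case True
    then have s: "T \<le> s" "s \<le> t / 2" "norm y \<le> s powr \<rho>" by auto
    have spos: "s > 0" using s T by simp
    have st: "s < t" using s tpos by simp
    have tspos: "t - s > 0" using st by simp
    have ts2: "t - s \<ge> t / 2" using s by simp
    have "norm (x - y) \<le> norm x + norm y" by (rule norm_triangle_ineq4)
    also have "\<dots> \<le> t powr \<rho> + t powr \<rho>"
      using x s(3) powr_mono2[of \<rho> s t] rho spos st by simp
    also have "\<dots> = 2 * 2 powr \<rho> * (t / 2) powr \<rho>" using tpos by (simp add: powr_divide)
    also have "\<dots> \<le> 2 * 2 powr \<rho> * (t - s) powr \<rho>"
      using ts2 rho tpos by (intro mult_left_mono powr_mono2) auto
    finally have "norm (x - y) \<le> (2 * 2 powr \<rho>) * (t - s) powr \<rho>" .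
    from G[OF tspos this] have G1: "ennreal (c * (t - s) powr (- \<gamma>)) \<le> Gk (t - s) (x - y)" .
    have "t powr (- \<gamma>) \<le> (t - s) powr (- \<gamma>)" using gpos tspos spos by (intro powr_mono2') auto
    then have "ennreal (c * t powr (- \<gamma>)) \<le> ennreal (c * (t - s) powr (- \<gamma>))"
      using c by (intro ennreal_leI mult_left_mono) auto
    with G1 have G2: "ennreal (c * t powr (- \<gamma>)) \<le> Gk (t - s) (x - y)" by (meson order_trans)
    have Vb: "ennreal (L * s powr (- \<gamma>)) \<le> V s y" using P s unfolding lowP_def by auto
    have V2: "ennreal ((L * s powr (- \<gamma>)) powr (1 + \<eta>)) \<le> enn_powr (V s y) (1 + \<eta>)"
      by (rule enn_powr_mono[OF _ Vb]) (use L eta in auto)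
    have "f y s = ennreal (c * t powr (- \<gamma>)) * ennreal ((L * s powr (- \<gamma>)) powr (1 + \<eta>))"
      unfolding f_def F_def using True c by (simp add: ennreal_mult)
    also have "\<dots> \<le> Gk (t - s) (x - y) * enn_powr (V s y) (1 + \<eta>)"
      by (intro mult_mono G2 V2) auto
    finally show ?thesis using spos st by simp
  qed (simp add: f_def)
  have fm: "(\<lambda>(y, s). f y s) \<in> borel_measurable (lborel \<Otimes>\<^sub>M lborel)"
    unfolding f_def F_def by measurable
  have Fnn: "F s \<ge> 0" for s unfolding F_def using c by simp
  have inner: "(\<integral>\<^sup>+y. f y s \<partial>lborel) = indicator {T..t/2} s * ennreal (F s * (\<omega> * s powr \<gamma>))" for s
  proof (cases "T \<le> s \<and> s \<le> t / 2")
    case True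
    then have spos: "s > 0" using T by simp
    have "(\<integral>\<^sup>+y. f y s \<partial>lborel) = (\<integral>\<^sup>+y. ennreal (F s) * indicator (cball (0::'a) (s powr \<rho>)) y \<partial>lborel)"
      unfolding f_def using True by (intro nn_integral_cong) (auto simp: indicator_def mult.commute)
    also have "\<dots> = ennreal (F s) * emeasure lborel (cball (0::'a) (s powr \<rho>))"
      by (rule nn_integral_cmult_indicator) simp
    also have "emeasure lborel (cball (0::'a) (s powr \<rho>)) = ennreal (\<omega> * (s powr \<rho>) ^ DIM('a))"
      unfolding \<omega>_def by (rule emeasure_cball) simp
    also have "(s powr \<rho>) ^ DIM('a) = s powr \<gamma>"
      using spos gam by (simp add: powr_power mult.commute)
    finally show ?thesis using True Fnn[of s] \<omega>pos by (simp add: ennreal_mult)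
  qed (auto simp: f_def indicator_def)
  define Q where "Q = c * \<omega> * L powr (1 + \<eta>) * t powr (- \<gamma>)"
  have Qnn: "Q \<ge> 0" unfolding Q_def using c \<omega>pos by simp
  have pw2: "indicator {T..t/2} s * ennreal (Q * (1 / s)) \<le> indicator {T..t/2} s * ennreal (F s * (\<omega> * s powr \<gamma>))" for s
  proof (cases "T \<le> s \<and> s \<le> t / 2")
    case True
    then have spos: "s > 0" and s1: "s \<ge> 1" using T by auto
    have "(L * s powr (- \<gamma>)) powr (1 + \<eta>) = L powr (1 + \<eta>) * s powr (- \<gamma> * (1 + \<eta>))"
      using L spos by (simp add: powr_mult powr_powr)
    then have "F s * (\<omega> * s powr \<gamma>) = Q * (s powr (- \<gamma> * (1 + \<eta>)) * s powr \<gamma>)"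
      unfolding F_def Q_def by (simp add: mult_ac)
    also have "s powr (- \<gamma> * (1 + \<eta>)) * s powr \<gamma> = s powr (- (\<eta> * \<gamma>))"
      using spos by (simp add: powr_add[symmetric] algebra_simps)
    also have "s powr (- (\<eta> * \<gamma>)) \<ge> s powr (-1)"
      using s1 eta by (intro powr_mono) auto
    then have "Q * (1 / s) \<le> Q * s powr (- (\<eta> * \<gamma>))"
      using Qnn spos by (intro mult_left_mono) (auto simp: powr_minus_divide)
    finally show ?thesis using True by (simp add: ennreal_leI)
  qed simp
  have "ennreal ((c * unit_ball_vol (real DIM('a)) * k * L powr (1 + \<eta>)) * t powr (- \<gamma>)) = ennreal Q * ennreal k"
    unfolding Q_def \<omega>_def using k by (simp add: ennreal_mult'[symmetric] mult_ac)
  also have "ennreal Q * ennreal k \<le> ennreal Q * ennreal (ln (t / 2) - ln T)"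
  proof (intro mult_left_mono ennreal_leI)
    have "exp k \<le> t / (2 * T)" using t T by (simp add: field_simps)
    then have "k \<le> ln (t / (2 * T))" using T tpos by (metis exp_le_cancel_iff exp_ln divide_pos_pos mult_pos_pos zero_less_numeral less_le_trans zero_less_one)
    also have "ln (t / (2 * T)) = ln (t / 2) - ln T" using T tpos by (simp add: ln_div ln_mult)
    finally show "k \<le> ln (t / 2) - ln T" .
  qed simp
  also have "ennreal Q * ennreal (ln (t / 2) - ln T) = ennreal Q * (\<integral>\<^sup>+s. indicator {T..t/2} s * ennreal (1 / s) \<partial>lborel)"
    using T t2T by (subst nn_integral_inv_interval) auto
  also have "\<dots> = (\<integral>\<^sup>+s. ennreal Q * (indicator {T..t/2} s * ennreal (1 / s)) \<partial>lborel)"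
    by (rule nn_integral_cmult[symmetric]) auto
  also have "\<dots> = (\<integral>\<^sup>+s. indicator {T..t/2} s * ennreal (Q * (1 / s)) \<partial>lborel)"
    using Qnn by (intro nn_integral_cong) (auto simp: ennreal_mult'[symmetric] mult_ac indicator_def)
  also have "\<dots> \<le> (\<integral>\<^sup>+s. indicator {T..t/2} s * ennreal (F s * (\<omega> * s powr \<gamma>)) \<partial>lborel)"
    by (intro nn_integral_mono pw2)
  also have "\<dots> = (\<integral>\<^sup>+s. (\<integral>\<^sup>+y. f y s \<partial>lborel) \<partial>lborel)"
    by (simp add: inner)
  also have "\<dots> = (\<integral>\<^sup>+y. (\<integral>\<^sup>+s. f y s \<partial>lborel) \<partial>lborel)"
    by (rule lborel_pair.Fubini'[OF fm])
  also have "\<dots> \<le> (\<integral>\<^sup>+ y. (\<integral>\<^sup>+ s. indicator {0<..<t} s * (Gk (t - s) (x - y) * enn_powr (V s y) (1 + \<eta>)) \<partial>lborel) \<partial>lborel)"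
    by (intro nn_integral_mono pw)
  also have "\<dots> \<le> V t x" by (rule Veq[OF tpos])
  finally show "ennreal ((c * unit_ball_vol (real DIM('a)) * k * L powr (1 + \<eta>)) * t powr (- \<gamma>)) \<le> V t x" .
qed

lemma linear_lemma:
  fixes V :: "real \<Rightarrow> 'a::euclidean_space \<Rightarrow> ennreal" and Gk :: "real \<Rightarrow> 'a \<Rightarrow> ennreal" and V0 :: "'a \<Rightarrow> real"
  assumes rho: "\<rho> > 0" and c2: "c2 > 0"
    and G: "\<And>\<tau> z. \<tau> > 0 \<Longrightarrow> norm z \<le> 2 * \<tau> powr \<rho> \<Longrightarrow> ennreal (c2 * \<tau> powr (- \<gamma>)) \<le> Gk \<tau> z"
    and V0m[measurable]: "V0 \<in> borel_measurable lborel" and V0nn: "\<And>x. 0 \<le> V0 x"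
    and V0nz: "\<not> (AE x in lborel. V0 x = 0)"
    and Veq: "\<And>t x. 0 < t \<Longrightarrow> (\<integral>\<^sup>+ y. Gk t (x - y) * ennreal (V0 y) \<partial>lborel) \<le> V t x"
  shows "\<exists>T1\<ge>1. \<exists>A>0. lowP V \<rho> \<gamma> T1 A"
proof -
  have V0b[measurable]: "V0 \<in> borel_measurable borel" using V0m by (simp add: measurable_lborel1)
  have cb[measurable]: "cball (0::'a) r \<in> sets borel" for r by simp
  have "\<exists>n::nat. (\<integral>\<^sup>+y. indicator (cball 0 (real n)) y * ennreal (V0 y) \<partial>lborel) \<noteq> 0"
  proof (rule ccontr)
    assume "\<not> ?thesis"
    then have z: "\<And>n::nat. (\<integral>\<^sup>+y. indicator (cball 0 (real n)) y * ennreal (V0 y) \<partial>lborel) = 0" by blast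
    have "AE y in lborel. indicator (cball 0 (real n)) y * ennreal (V0 y) = 0" for n :: nat
      using z[of n] by (subst (asm) nn_integral_0_iff_AE) auto
    then have "AE y in lborel. \<forall>n::nat. indicator (cball 0 (real n)) y * ennreal (V0 y) = 0"
      by (subst AE_all_countable) blast
    then have "AE y in lborel. V0 y = 0"
    proof (rule AE_mp, intro AE_I2 impI)
      fix y :: 'a assume H: "\<forall>n::nat. indicator (cball 0 (real n)) y * ennreal (V0 y) = 0"
      obtain n :: nat where "norm y \<le> real n" using real_arch_simple by blast
      then have "ennreal (V0 y) = 0" using H[rule_format, of n] by simp
      then show "V0 y = 0" using V0nn[of y] by simp
    qed
    with V0nz show False by blast
  qed
  then obtain n :: nat where nz: "(\<integral>\<^sup>+y. indicator (cball 0 (real n)) y * ennreal (V0 y) \<partial>lborel) \<noteq> 0" by blast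
  then have "0 < (\<integral>\<^sup>+y. indicator (cball 0 (real n)) y * ennreal (V0 y) \<partial>lborel)"
    by (simp add: zero_less_iff_neq_zero)
  then obtain w where w: "0 < w" "w < (\<integral>\<^sup>+y. indicator (cball 0 (real n)) y * ennreal (V0 y) \<partial>lborel)"
    using dense by blast
  then obtain m where "w = ennreal m" "m \<ge> 0" by (cases w) auto
  then have m: "m > 0" and mI: "ennreal m \<le> (\<integral>\<^sup>+y. indicator (cball 0 (real n)) y * ennreal (V0 y) \<partial>lborel)"
    using w by auto
  define T1 where "T1 = max 1 (real n powr (1 / \<rho>))"
  have T1: "T1 \<ge> 1" unfolding T1_def by simp
  have nt: "real n \<le> t powr \<rho>" if t: "t \<ge> T1" for t
  proof (cases "n = 0")
    case False
    have "real n = (real n powr (1 / \<rho>)) powr \<rho>" using False rho by (simp add: powr_powr)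
    also have "\<dots> \<le> t powr \<rho>" using t rho unfolding T1_def by (intro powr_mono2) auto
    finally show ?thesis .
  qed simp
  have "lowP V \<rho> \<gamma> T1 (c2 * m)"
    unfolding lowP_def
  proof (intro allI impI)
    fix t :: real and x :: 'a assume t: "T1 \<le> t" and x: "norm x \<le> t powr \<rho>"
    have tpos: "t > 0" using t T1 by simp
    have pw: "ennreal (c2 * t powr (- \<gamma>)) * (indicator (cball 0 (real n)) y * ennreal (V0 y)) \<le> Gk t (x - y) * ennreal (V0 y)" for y
    proof (cases "y \<in> cball 0 (real n)")
      case True
      have "norm (x - y) \<le> norm x + norm y" by (rule norm_triangle_ineq4)
      also have "\<dots> \<le> 2 * t powr \<rho>" using x True nt[OF t] by simp
      finally have "ennreal (c2 * t powr (- \<gamma>)) \<le> Gk t (x - y)" by (rule G[OF tpos])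
      then show ?thesis using True by (simp add: mult_right_mono)
    qed simp
    have "ennreal (c2 * m * t powr (- \<gamma>)) = ennreal (c2 * t powr (- \<gamma>)) * ennreal m"
      using c2 m by (simp add: ennreal_mult'[symmetric] mult_ac)
    also have "\<dots> \<le> ennreal (c2 * t powr (- \<gamma>)) * (\<integral>\<^sup>+y. indicator (cball 0 (real n)) y * ennreal (V0 y) \<partial>lborel)"
      by (intro mult_left_mono mI) auto
    also have "\<dots> = (\<integral>\<^sup>+y. ennreal (c2 * t powr (- \<gamma>)) * (indicator (cball 0 (real n)) y * ennreal (V0 y)) \<partial>lborel)"
      by (rule nn_integral_cmult[symmetric]) auto
    also have "\<dots> \<le> (\<integral>\<^sup>+ y. Gk t (x - y) * ennreal (V0 y) \<partial>lborel)"
      by (intro nn_integral_mono pw)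
    also have "\<dots> \<le> V t x" by (rule Veq[OF tpos])
    finally show "ennreal (c2 * m * t powr (- \<gamma>)) \<le> V t x" .
  qed
  then show ?thesis using T1 c2 m by (intro exI[of _ T1] conjI exI[of _ "c2 * m"]) auto
qed

lemma powr_pow_neg:
  fixes x :: real
  assumes "x > 0"
  shows "(x ^ n) powr (- g) = inverse ((x powr g) ^ n)"
proof -
  have "(x ^ n) powr (- g) = (x powr real n) powr (- g)" using assms by (simp add: powr_realpow)
  also have "\<dots> = x powr (real n * (- g))" by (simp add: powr_powr)
  also have "\<dots> = inverse (x powr (real n * g))" by (simp add: powr_minus)
  also have "x powr (real n * g) = (x powr g) ^ n" using assms by (simp add: powr_power)
  finally show ?thesis .
qed

lemma iterate_lemma:
  fixes V :: "real \<Rightarrow> 'a::euclidean_space \<Rightarrow> ennreal"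
  assumes rho: "\<rho> > 0" and gam: "\<gamma> > 0" and eta: "\<eta> > 0" and D: "D > 0"
    and step: "\<And>T L k. 1 \<le> T \<Longrightarrow> 0 \<le> L \<Longrightarrow> 0 \<le> k \<Longrightarrow> lowP V \<rho> \<gamma> T L \<Longrightarrow>
                 lowP V \<rho> \<gamma> (2 * exp k * T) (D * k * L powr (1 + \<eta>))"
    and T1: "T1 \<ge> 1" and A: "A > 0" and start: "lowP V \<rho> \<gamma> T1 A"
  shows "\<forall>M>0. \<exists>T0>0. \<forall>t\<ge>T0. \<forall>x. norm x \<le> t powr \<rho> \<longrightarrow> ennreal M \<le> V t x"
proof -
  define e where "e = 2 * exp (1::real)"
  have "exp (1::real) > 1" by simp
  then have e1: "e > 1" unfolding e_def by linarith
  define q where "q = e powr \<gamma>"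
  have q1: "q \<ge> 1" unfolding q_def using e1 gam by (simp add: ge_one_powr_ge_zero)
  define K where "K = max 1 ((2 * q / D) powr (1 / \<eta>) / (D * A powr (1 + \<eta>)))"
  have K1: "K \<ge> 1" unfolding K_def by simp
  define L0 where "L0 = D * K * A powr (1 + \<eta>)"
  have DA: "D * A powr (1 + \<eta>) > 0" using D A by simp
  have L0pos: "L0 > 0" unfolding L0_def using D A K1 by simp
  have "L0 \<ge> (2 * q / D) powr (1 / \<eta>)"
  proof -
    have "(2 * q / D) powr (1 / \<eta>) = (D * A powr (1 + \<eta>)) * ((2 * q / D) powr (1 / \<eta>) / (D * A powr (1 + \<eta>)))"
      using nonzero_mult_div_cancel_left[of "D * A powr (1 + \<eta>)" "(2 * q / D) powr (1 / \<eta>)"] DA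
      by (simp only: times_divide_eq_right)
    also have "\<dots> \<le> (D * A powr (1 + \<eta>)) * K" unfolding K_def using DA by (intro mult_left_mono) auto
    finally show ?thesis unfolding L0_def by (simp add: mult_ac)
  qed
  then have "L0 powr \<eta> \<ge> ((2 * q / D) powr (1 / \<eta>)) powr \<eta>" using eta by (intro powr_mono2) auto
  also have "((2 * q / D) powr (1 / \<eta>)) powr \<eta> = 2 * q / D" using eta q1 D by (simp add: powr_powr)
  finally have L0eta: "D * L0 powr \<eta> \<ge> 2 * q" using D by (simp add: field_simps)
  define T0' where "T0' = 2 * exp K * T1"
  have T0'1: "T0' \<ge> 1"
  proof -
    have eK: "exp K \<ge> 1" using K1 by simp
    have "1 * 1 \<le> exp K * T1" using eK T1 by (intro mult_mono) auto
    then show ?thesis unfolding T0'_def by (simp add: mult.assoc)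
  qed
  have start': "lowP V \<rho> \<gamma> T0' L0" unfolding T0'_def L0_def
    by (rule step[OF T1 _ _ start]) (use A K1 in auto)
  have claim: "\<exists>L. L \<ge> L0 * (2 * q) ^ n \<and> lowP V \<rho> \<gamma> (e ^ n * T0') L" for n
  proof (induction n)
    case 0 then show ?case using start' by auto
  next
    case (Suc n)
    then obtain L where L: "L \<ge> L0 * (2 * q) ^ n" "lowP V \<rho> \<gamma> (e ^ n * T0') L" by blast
    have "2 * q \<ge> 1" using q1 by simp
    then have "(2 * q) ^ n \<ge> 1" by (rule one_le_power)
    then have LL0: "L \<ge> L0" using L(1) L0pos by (smt (verit) mult_le_cancel_left1)
    have Tn: "e ^ n * T0' \<ge> 1" using e1 T0'1 by (smt (verit) mult_le_cancel_right1 one_le_power)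
    have "lowP V \<rho> \<gamma> (2 * exp 1 * (e ^ n * T0')) (D * 1 * L powr (1 + \<eta>))"
      by (rule step[OF Tn _ _ L(2)]) (use LL0 L0pos in auto)
    moreover have "2 * exp 1 * (e ^ n * T0') = e ^ Suc n * T0'" unfolding e_def by (simp add: mult_ac)
    moreover have "D * 1 * L powr (1 + \<eta>) \<ge> L0 * (2 * q) ^ Suc n"
    proof -
      have Lpos: "L > 0" using LL0 L0pos by simp
      have "L powr (1 + \<eta>) = L * L powr \<eta>" using Lpos by (simp add: powr_add)
      have "D * L0 powr \<eta> \<le> D * L powr \<eta>" using LL0 L0pos eta D by (intro mult_left_mono powr_mono2) auto
      then have "2 * q \<le> D * L powr \<eta>" using L0eta by simp
      then have "2 * q * L \<le> D * L powr \<eta> * L" using Lpos by (intro mult_right_mono) auto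
      moreover have "L0 * (2 * q) ^ Suc n \<le> 2 * q * L" using L(1) q1 by (simp add: mult_ac)
      ultimately show ?thesis using \<open>L powr (1 + \<eta>) = L * L powr \<eta>\<close> by (simp add: mult_ac)
    qed
    ultimately show ?case by auto
  qed
  show ?thesis
  proof (intro allI impI)
    fix M :: real assume M: "M > 0"
    define B where "B = L0 * T0' powr (- \<gamma>) / q"
    have Bpos: "B > 0" unfolding B_def using L0pos T0'1 q1 by simp
    obtain N :: nat where N: "M / B < 2 ^ N" using real_arch_pow[of 2 "M / B"] by auto
    define T0 where "T0 = e ^ N * T0'"
    have eN: "e ^ N \<ge> 1" using e1 by simp
    have T0ge: "T0 \<ge> T0'" unfolding T0_def using eN T0'1 by (smt (verit) mult_le_cancel_right1)
    have "\<forall>t\<ge>T0. \<forall>x. norm x \<le> t powr \<rho> \<longrightarrow> ennreal M \<le> V t x"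
    proof (intro allI impI)
      fix t :: real and x :: 'a assume t: "T0 \<le> t" and x: "norm x \<le> t powr \<rho>"
      have tpos: "t > 0" using t T0ge T0'1 by simp
      obtain m' where "t / T0' < e ^ m'" using real_arch_pow[OF e1, of "t / T0'"] by auto
      then have m': "t < e ^ m' * T0'" using T0'1 by (simp add: field_simps)
      have n0: "\<not> t < e ^ 0 * T0'" using t T0ge by simp
      obtain kk where kk: "\<forall>i\<le>kk. \<not> t < e ^ i * T0'" "t < e ^ Suc kk * T0'"
        using ex_least_nat_less[where P="\<lambda>i. t < e ^ i * T0'", OF m' n0] by blast
      have kkN: "kk \<ge> N"
      proof (rule ccontr)
        assume "\<not> kk \<ge> N"
        then have "Suc kk \<le> N" by simp
        then have "e ^ Suc kk \<le> e ^ N" using e1 by (intro power_increasing) auto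
        then have "e ^ Suc kk * T0' \<le> T0" unfolding T0_def using T0'1 by (intro mult_right_mono) auto
        then show False using kk(2) t by simp
      qed
      obtain L where L: "L \<ge> L0 * (2 * q) ^ kk" "lowP V \<rho> \<gamma> (e ^ kk * T0') L" using claim by blast
      have tk: "t \<ge> e ^ kk * T0'" using kk(1) by auto
      have "0 < L0 * (2 * q) ^ kk" using L0pos q1 by simp
      then have Lnn: "0 \<le> L" using L(1) by linarith
      have VL: "ennreal (L * t powr (- \<gamma>)) \<le> V t x" using L(2) tk x unfolding lowP_def by auto
      have "t powr (- \<gamma>) \<ge> (e ^ Suc kk * T0') powr (- \<gamma>)"
        using kk(2) tpos gam by (intro powr_mono2') auto
      also have "(e ^ Suc kk * T0') powr (- \<gamma>) = (e ^ Suc kk) powr (- \<gamma>) * T0' powr (- \<gamma>)"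
        using e1 T0'1 by (intro powr_mult)
      also have "(e ^ Suc kk) powr (- \<gamma>) = inverse (q ^ Suc kk)"
        unfolding q_def by (rule powr_pow_neg) (use e1 in simp)
      finally have tg: "t powr (- \<gamma>) \<ge> inverse (q ^ Suc kk) * T0' powr (- \<gamma>)" .
      have "M < B * 2 ^ N" using N Bpos by (simp add: field_simps)
      also have "\<dots> \<le> B * 2 ^ kk" using kkN Bpos by (intro mult_left_mono power_increasing) auto
      also have "B * 2 ^ kk = L0 * (2 * q) ^ kk * (inverse (q ^ Suc kk) * T0' powr (- \<gamma>))"
        unfolding B_def using q1 by (simp add: power_mult_distrib field_simps)
      also have "\<dots> \<le> L * t powr (- \<gamma>)"
        using L(1) tg L0pos q1 Lnn by (intro mult_mono) auto
      finally have "M \<le> L * t powr (- \<gamma>)" by simp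
      then show "ennreal M \<le> V t x" using VL by (meson ennreal_leI order_trans)
    qed
    then show "\<exists>T0>0. \<forall>t\<ge>T0. \<forall>x. norm x \<le> t powr \<rho> \<longrightarrow> ennreal M \<le> V t x"
      using T0ge T0'1 by (intro exI[of _ T0]) auto
  qed
qed

theorem proposition3p1:
  fixes \<alpha> \<beta> \<eta> :: real
    and g :: "real \<Rightarrow> real"
    and V0 :: "'a::euclidean_space \<Rightarrow> real"
    and V :: "real \<Rightarrow> 'a \<Rightarrow> ennreal"
  assumes "0 < \<alpha>" "\<alpha> < 2" "0 < \<beta>" "\<beta> < 1"
    and "0 < \<eta>" "\<eta> \<le> \<alpha> / (\<beta> * real DIM('a))"
    and "is_subordinator_density \<beta> g"
    and "V0 \<in> borel_measurable lborel" "\<And>x. 0 \<le> V0 x"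
    and "\<not> (AE x in lborel. V0 x = 0)"
    and "(\<lambda>z. V (fst z) (snd z)) \<in>
           borel_measurable (restrict_space (lborel \<Otimes>\<^sub>M lborel) ({0<..} \<times> UNIV))"
    and "\<And>t x. 0 < t \<Longrightarrow>
           V t x = (\<integral>\<^sup>+ y. Gker \<alpha> \<beta> g t (x - y) * ennreal (V0 y) \<partial>lborel)
                 + (\<integral>\<^sup>+ y. (\<integral>\<^sup>+ s. indicator {0<..<t} s *
                        (Gker \<alpha> \<beta> g (t - s) (x - y) * enn_powr (V s y) (1 + \<eta>)) \<partial>lborel) \<partial>lborel)"
  shows "\<forall>M>0. \<exists>T0>0. \<forall>t\<ge>T0.
           (INF x\<in>ball 0 (t powr (\<beta> / \<alpha>)). V t x) \<ge> ennreal M"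
proof -
  note a = assms(1) and b = assms(3,4) and eta = assms(5,6) and sd = assms(7)
    and V0 = assms(8,9,10) and Veq = assms(12)
  define \<rho> where "\<rho> = \<beta> / \<alpha>"
  define \<gamma> where "\<gamma> = real DIM('a) * \<rho>"
  have rho: "\<rho> > 0" unfolding \<rho>_def using a b by simp
  have gam: "\<gamma> > 0" unfolding \<gamma>_def using rho by simp
  have etag: "\<eta> * \<gamma> \<le> 1"
  proof -
    have pos: "\<beta> * real DIM('a) > 0" using b by simp
    have "\<eta> * (\<beta> * real DIM('a)) \<le> \<alpha>" using eta(2) pos by (simp add: le_divide_eq)
    then show ?thesis unfolding \<gamma>_def \<rho>_def using a by (simp add: field_simps)
  qed
  have KL: "\<forall>R>0. \<exists>c>0. \<forall>\<tau>>0. \<forall>z::'a. norm z \<le> R * \<tau> powr \<rho> \<longrightarrow>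
           ennreal (c * \<tau> powr (- \<gamma>)) \<le> Gker \<alpha> \<beta> g \<tau> z"
    using kernel_lower[OF a b sd, where 'a='a] unfolding \<gamma>_def \<rho>_def by simp
  obtain c where c: "c > 0" and
    Gc: "\<And>\<tau> z. \<tau> > 0 \<Longrightarrow> norm (z::'a) \<le> (2 * 2 powr \<rho>) * \<tau> powr \<rho> \<Longrightarrow> ennreal (c * \<tau> powr (- \<gamma>)) \<le> Gker \<alpha> \<beta> g \<tau> z"
    using KL[rule_format, of "2 * 2 powr \<rho>"] by auto
  obtain c2 where c2: "c2 > 0" and
    Gc2: "\<And>\<tau> z. \<tau> > 0 \<Longrightarrow> norm (z::'a) \<le> 2 * \<tau> powr \<rho> \<Longrightarrow> ennreal (c2 * \<tau> powr (- \<gamma>)) \<le> Gker \<alpha> \<beta> g \<tau> z"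
    using KL[rule_format, of 2] by auto
  have V1: "(\<integral>\<^sup>+ y. Gker \<alpha> \<beta> g t (x - y) * ennreal (V0 y) \<partial>lborel) \<le> V t x" if "0 < t" for t x
    using Veq[OF that, of x] by (simp add: add_increasing2)
  have V2: "(\<integral>\<^sup>+ y. (\<integral>\<^sup>+ s. indicator {0<..<t} s * (Gker \<alpha> \<beta> g (t - s) (x - y) * enn_powr (V s y) (1 + \<eta>)) \<partial>lborel) \<partial>lborel) \<le> V t x"
    if "0 < t" for t x
    using Veq[OF that, of x] by (simp add: add_increasing)
  obtain T1 A where T1: "T1 \<ge> 1" and A: "A > 0" and start: "lowP V \<rho> \<gamma> T1 A"
    using linear_lemma[OF rho c2 Gc2 V0 V1] by blast
  have step: "\<And>T L k. 1 \<le> T \<Longrightarrow> 0 \<le> L \<Longrightarrow> 0 \<le> k \<Longrightarrow> lowP V \<rho> \<gamma> T L \<Longrightarrow>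
                 lowP V \<rho> \<gamma> (2 * exp k * T) ((c * unit_ball_vol (real DIM('a))) * k * L powr (1 + \<eta>))"
    using step_lemma[OF rho \<gamma>_def eta(1) etag c Gc V2] by blast
  have D: "c * unit_ball_vol (real DIM('a)) > 0" using c by simp
  have main: "\<forall>M>0. \<exists>T0>0. \<forall>t\<ge>T0. \<forall>x. norm x \<le> t powr \<rho> \<longrightarrow> ennreal M \<le> V t x"
    by (rule iterate_lemma[OF rho gam eta(1) D step T1 A start])
  show ?thesis
  proof (intro allI impI)
    fix M :: real assume "M > 0"
    then obtain T0 where T0: "T0 > 0" "\<And>t x. t \<ge> T0 \<Longrightarrow> norm x \<le> t powr \<rho> \<Longrightarrow> ennreal M \<le> V t x"
      using main by blast
    show "\<exists>T0>0. \<forall>t\<ge>T0. (INF x\<in>ball 0 (t powr (\<beta> / \<alpha>)). V t x) \<ge> ennreal M"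
    proof (intro exI[of _ T0] conjI allI impI)
      fix t assume t: "T0 \<le> t"
      show "(INF x\<in>ball 0 (t powr (\<beta> / \<alpha>)). V t x) \<ge> ennreal M"
      proof (rule INF_greatest)
        fix x :: 'a assume "x \<in> ball 0 (t powr (\<beta> / \<alpha>))"
        then have "norm x \<le> t powr \<rho>" unfolding \<rho>_def by simp
        then show "ennreal M \<le> V t x" using T0(2)[OF t] by blast
      qed
    qed (use T0 in auto)
  qed
qed

end
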